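(* Let $A$ be an $m$-dimensional binary array of size $n_1\times\cdots\times n_m$ and $\mathbb{A}$ its periodic extension. Suppose $(\alpha_1,\omega_1)\neq(\alpha_2,\omega_2)$ are two ordered pairs of distinct dots of $A$, with $\alpha_j=(a_{j1},\dots,a_{jm})$, $\omega_j=(w_{j1},\dots,w_{jm})$, such that the toroidal vectors from $\alpha_1$ to $\omega_1$ and from $\alpha_2$ to $\omega_2$ both equal $\langle h_1,\dots,h_m\rangle$. If for every $i\in[m]$ with $h_i=n_i/2$ we have either $w_{1i}-a_{1i}=w_{2i}-a_{2i}$, or ($a_{1i}\neq w_{2i}$ and $a_{2i}\neq w_{1i}$), then there is an $n_1\times\cdots\times n_m$ window of $\mathbb{A}$ having a repeated difference vector.
   Context: For $n\in\mathbb{N}$, $[n]=\{1,\dots,n\}$. An $m$-dimensional binary array of size $n_1\times\cdots\times n_m$ ($m\ge2$, all $n_i\ge 2$) is a function $A:[n_1]\times\cdots\times[n_m]\to\{0,1\}$; a dot is a point where $A$ equals 1. The periodic extension $\mathbb{A}:\mathbb{Z}^m\to\{0,1\}$ is $\mathbb{A}(a_1,\dots,a_m)=A(a_1',\dots,a_m')$ with $a_i'\in[n_i]$, $a_i'\equiv a_i\pmod{n_i}$. An $n_1\times\cdots\times n_m$ window of $\mathbb{A}$ is the restriction of $\mathbb{A}$ to a box $\prod_i\{k_i,\dots,k_i+n_i-1\}$, $k_i\in\mathbb{Z}$. The difference vector from a dot $\alpha=(a_1,\dots,a_m)$ to a distinct dot $\omega=(w_1,\dots,w_m)$ is $\langle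 w_1-a_1,\dots,w_m-a_m\rangle\in\mathbb{Z}^m$; the toroidal vector is $\langle (w_1-a_1)\bmod n_1,\dots,(w_m-a_m)\bmod n_m\rangle$ with components in $\{0,\dots,n_i-1\}$. A window has a repeated difference vector if two distinct ordered pairs of distinct dots in it have the same difference vector. *)

theory Defs
  imports Main
begin

text \<open>The dimension is m = length n, where n :: nat list lists the sizes
  n_1,...,n_m (0-based list index i corresponds to coordinate i+1). An array A of size n_1 x ... x n_m is a predicate on points
  (True = 1 = dot); only its values on the box [n_1] x ... x [n_m] matter.\<close>

definition in_box :: "nat list \<Rightarrow> int list \<Rightarrow> bool" where
  "in_box n p \<longleftrightarrow> length p = length n \<and>
     (\<forall>i<length n. 1 \<le> p ! i \<and> p ! i \<le> int (n ! i))"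

definition is_dot :: "nat list \<Rightarrow> (int list \<Rightarrow> bool) \<Rightarrow> int list \<Rightarrow> bool" where
  "is_dot n A p \<longleftrightarrow> in_box n p \<and> A p"

definition reduce :: "nat list \<Rightarrow> int list \<Rightarrow> int list" where
  "reduce n p = map (\<lambda>i. (p ! i - 1) mod int (n ! i) + 1) [0..<length n]"

definition per_ext :: "nat list \<Rightarrow> (int list \<Rightarrow> bool) \<Rightarrow> int list \<Rightarrow> bool" where
  "per_ext n A p \<longleftrightarrow> length p = length n \<and> A (reduce n p)"

definition in_window :: "nat list \<Rightarrow> int list \<Rightarrow> int list \<Rightarrow> bool" where
  "in_window n k p \<longleftrightarrow> length p = length n \<and>
     (\<forall>i<length n. k ! i \<le> p ! i \<and> p ! i \<le> k ! i + int (n ! i) - 1)"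

definition diff_vec :: "int list \<Rightarrow> int list \<Rightarrow> int list" where
  "diff_vec a w = map2 (\<lambda>wi ai. wi - ai) w a"

definition toroidal_vec :: "nat list \<Rightarrow> int list \<Rightarrow> int list \<Rightarrow> int list" where
  "toroidal_vec n a w = map (\<lambda>i. (w ! i - a ! i) mod int (n ! i)) [0..<length n]"

definition window_has_repeated_diff ::
  "nat list \<Rightarrow> (int list \<Rightarrow> bool) \<Rightarrow> int list \<Rightarrow> bool" where
  "window_has_repeated_diff n A k \<longleftrightarrow>
     (\<exists>p1 q1 p2 q2.
        in_window n k p1 \<and> in_window n k q1 \<and> in_window n k p2 \<and> in_window n k q2 \<and>
        per_ext n A p1 \<and> per_ext n A q1 \<and> per_ext n A p2 \<and> per_ext n A q2 \<and>
        p1 \<noteq> q1 \<and> p2 \<noteq> q2 \<and> (p1, q1) \<noteq> (p2, q2) \<and>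
        diff_vec p1 q1 = diff_vec p2 q2)"

end

theory Submission
  imports Defs
begin

definition shortrep :: "int \<Rightarrow> int \<Rightarrow> int" where
  "shortrep N x = (if 2 * (x mod N) \<le> N then x mod N else x mod N - N)"

lemma shortrep_mod: "(N::int) > 0 \<Longrightarrow> (a + shortrep N x) mod N = (a + x) mod N"
proof -
  have "(a + (x mod N - N)) mod N = (a + x mod N) mod N"
  proof -
    have "a + (x mod N - N) = (a + x mod N) + (-1) * N" by simp
    then show ?thesis by (metis mod_mult_self1)
  qed
  then show ?thesis unfolding shortrep_def by (simp add: mod_add_right_eq)
qed

lemma shortrep_bound: "(N::int) > 0 \<Longrightarrow> 2 * \<bar>shortrep N x\<bar> \<le> N"
proof -
  assume N: "N > 0"
  have "0 \<le> x mod N" "x mod N < N" using N by auto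
  then show ?thesis unfolding shortrep_def by (auto simp: abs_if)
qed

lemma shortrep_eq: "(N::int) > 0 \<Longrightarrow> 2 * \<bar>shortrep N x\<bar> = N \<Longrightarrow> 2 * (x mod N) = N"
proof -
  assume N: "N > 0" and e: "2 * \<bar>shortrep N x\<bar> = N"
  have "0 \<le> x mod N" "x mod N < N" using N by auto
  then show ?thesis using e unfolding shortrep_def
    by (cases "2 * (x mod N) \<le> N") (simp_all add: abs_if split: if_splits)
qed

lemma half_cases: fixes N x :: int assumes "N > 0" "2 * (x mod N) = N" "-N < x" "x < N"
  shows "2 * x = N \<or> 2 * x = - N"
proof (cases "x \<ge> 0")
  case True then have "x mod N = x" using assms by simp
  then show ?thesis using assms by simp
next
  case False
  have "(x + N) mod N = x + N" using assms False by (intro mod_pos_pos_trivial) auto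
  then have "x mod N = x + N" by simp
  then show ?thesis using assms by simp
qed

lemma coord:
  fixes N a1 w1 a2 w2 :: int
  assumes N: "N \<ge> 2"
    and b: "1 \<le> a1" "a1 \<le> N" "1 \<le> w1" "w1 \<le> N" "1 \<le> a2" "a2 \<le> N" "1 \<le> w2" "w2 \<le> N"
    and t2: "(w2 - a2) mod N = (w1 - a1) mod N"
    and cond: "2 * ((w1 - a1) mod N) = N \<longrightarrow> (w1 - a1 = w2 - a2 \<or> (a1 \<noteq> w2 \<and> a2 \<noteq> w1))"
  shows "\<bar>shortrep N (w1 - a1)\<bar> + \<bar>shortrep N (a2 - a1)\<bar> \<le> N - 1"
proof (rule ccontr)
  assume c: "\<not> ?thesis"
  have N0: "N > 0" using N by simp
  have b1: "2 * \<bar>shortrep N (w1 - a1)\<bar> \<le> N" "2 * \<bar>shortrep N (a2 - a1)\<bar> \<le> N"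
    using shortrep_bound[OF N0] by auto
  hence "2 * \<bar>shortrep N (w1 - a1)\<bar> = N" "2 * \<bar>shortrep N (a2 - a1)\<bar> = N" using c by auto
  hence h1: "2 * ((w1 - a1) mod N) = N" and h2: "2 * ((a2 - a1) mod N) = N"
    using shortrep_eq[OF N0] by auto
  have h3: "2 * ((w2 - a2) mod N) = N" using h1 t2 by simp
  have x1: "2 * (w1 - a1) = N \<or> 2 * (w1 - a1) = - N" using half_cases[OF N0 h1] b by auto
  have x2: "2 * (a2 - a1) = N \<or> 2 * (a2 - a1) = - N" using half_cases[OF N0 h2] b by auto
  have x3: "2 * (w2 - a2) = N \<or> 2 * (w2 - a2) = - N" using half_cases[OF N0 h3] b by auto
  have "w1 = a2" using x1 x2 b by auto
  moreover have "w2 = a1" using x2 x3 b by auto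
  ultimately show False using cond h1 x1 N by auto
qed

lemma modrep: fixes N x :: int assumes "1 \<le> x" "x \<le> N" shows "(x - 1) mod N = x - 1"
  using assms by (intro mod_pos_pos_trivial) auto

lemma coord_mods:
  fixes N a1 w1 a2 w2 :: int
  assumes N: "N \<ge> 2"
    and b: "1 \<le> a1" "a1 \<le> N" "1 \<le> w1" "w1 \<le> N" "1 \<le> a2" "a2 \<le> N" "1 \<le> w2" "w2 \<le> N"
    and t2: "(w2 - a2) mod N = (w1 - a1) mod N"
  shows "(a1 + shortrep N (w1 - a1) - 1) mod N + 1 = w1"
    "(a1 + shortrep N (a2 - a1) - 1) mod N + 1 = a2"
    "(a1 + shortrep N (a2 - a1) + shortrep N (w1 - a1) - 1) mod N + 1 = w2"
proof -
  have N0: "N > 0" using N by simp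
  have "(a1 + shortrep N (w1 - a1) - 1) mod N = (a1 - 1 + shortrep N (w1 - a1)) mod N"
    by (simp add: algebra_simps)
  also have "\<dots> = (a1 - 1 + (w1 - a1)) mod N" by (rule shortrep_mod[OF N0])
  also have "\<dots> = w1 - 1" using modrep[of w1 N] b by simp
  finally show "(a1 + shortrep N (w1 - a1) - 1) mod N + 1 = w1" by simp
  have "(a1 + shortrep N (a2 - a1) - 1) mod N = (a1 - 1 + shortrep N (a2 - a1)) mod N"
    by (simp add: algebra_simps)
  also have "\<dots> = (a1 - 1 + (a2 - a1)) mod N" by (rule shortrep_mod[OF N0])
  also have "\<dots> = a2 - 1" using modrep[of a2 N] b by simp
  finally show "(a1 + shortrep N (a2 - a1) - 1) mod N + 1 = a2" by simp
  have "(a1 + shortrep N (a2 - a1) + shortrep N (w1 - a1) - 1) mod N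
      = ((a1 - 1 + shortrep N (a2 - a1)) + shortrep N (w1 - a1)) mod N"
    by (simp add: algebra_simps)
  also have "\<dots> = ((a1 - 1 + shortrep N (a2 - a1)) + (w1 - a1)) mod N" by (rule shortrep_mod[OF N0])
  also have "\<dots> = ((w1 - 1) + shortrep N (a2 - a1)) mod N" by (simp add: algebra_simps)
  also have "\<dots> = ((w1 - 1) + (a2 - a1)) mod N" by (rule shortrep_mod[OF N0])
  also have "\<dots> = ((a2 - 1) + (w1 - a1)) mod N" by (simp add: algebra_simps)
  also have "\<dots> = ((a2 - 1) + (w1 - a1) mod N) mod N" by (simp add: mod_add_right_eq)
  also have "\<dots> = ((a2 - 1) + (w2 - a2) mod N) mod N" using t2 by simp
  also have "\<dots> = ((a2 - 1) + (w2 - a2)) mod N" by (simp add: mod_add_right_eq)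
  also have "\<dots> = w2 - 1" using modrep[of w2 N] b by simp
  finally show "(a1 + shortrep N (a2 - a1) + shortrep N (w1 - a1) - 1) mod N + 1 = w2" by simp
qed

lemma reduce_eq:
  assumes "length p = length n" "length x = length n"
    "\<forall>i<length n. (p ! i - 1) mod int (n ! i) + 1 = x ! i"
  shows "reduce n p = x"
  using assms unfolding reduce_def by (intro nth_equalityI) auto

theorem mainTheorem3:
  fixes n :: "nat list" and A :: "int list \<Rightarrow> bool"
    and a1 w1 a2 w2 h :: "int list"
  assumes dim: "length n \<ge> 2"
    and sizes: "\<forall>i<length n. n ! i \<ge> 2"
    and dots: "is_dot n A a1" "is_dot n A w1" "is_dot n A a2" "is_dot n A w2"
    and distinct1: "a1 \<noteq> w1" and distinct2: "a2 \<noteq> w2"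
    and pairs_ne: "(a1, w1) \<noteq> (a2, w2)"
    and tor1: "toroidal_vec n a1 w1 = h"
    and tor2: "toroidal_vec n a2 w2 = h"
    and half: "\<forall>i<length n. 2 * h ! i = int (n ! i) \<longrightarrow>
                 (w1 ! i - a1 ! i = w2 ! i - a2 ! i \<or> (a1 ! i \<noteq> w2 ! i \<and> a2 ! i \<noteq> w1 ! i))"
  shows "\<exists>k. length k = length n \<and> window_has_repeated_diff n A k"
proof -
  define L where "L = length n"
  define e where "e i = shortrep (int (n ! i)) (w1 ! i - a1 ! i)" for i
  define t where "t i = shortrep (int (n ! i)) (a2 ! i - a1 ! i)" for i
  define q1 where "q1 = map (\<lambda>i. a1 ! i + e i) [0..<L]"
  define p2 where "p2 = map (\<lambda>i. a1 ! i + t i) [0..<L]"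
  define q2 where "q2 = map (\<lambda>i. a1 ! i + t i + e i) [0..<L]"
  define k where "k = map (\<lambda>i. a1 ! i + min 0 (e i) + min 0 (t i)) [0..<L]"
  have box: "in_box n a1" "in_box n w1" "in_box n a2" "in_box n w2"
    and AA: "A a1" "A w1" "A a2" "A w2" using dots unfolding is_dot_def by auto
  have len: "length a1 = L" "length w1 = L" "length a2 = L" "length w2 = L"
    using box unfolding in_box_def L_def by auto
  have bnd: "\<And>i. i < L \<Longrightarrow> 1 \<le> a1 ! i \<and> a1 ! i \<le> int (n ! i) \<and> 1 \<le> w1 ! i \<and> w1 ! i \<le> int (n ! i)
      \<and> 1 \<le> a2 ! i \<and> a2 ! i \<le> int (n ! i) \<and> 1 \<le> w2 ! i \<and> w2 ! i \<le> int (n ! i)"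
    using box unfolding in_box_def L_def by auto
  have hi1: "\<And>i. i < L \<Longrightarrow> h ! i = (w1 ! i - a1 ! i) mod int (n ! i)"
    using tor1 unfolding toroidal_vec_def L_def by auto
  have hi2: "\<And>i. i < L \<Longrightarrow> h ! i = (w2 ! i - a2 ! i) mod int (n ! i)"
    using tor2 unfolding toroidal_vec_def L_def by auto
  have Ni: "\<And>i. i < L \<Longrightarrow> int (n ! i) \<ge> 2" using sizes unfolding L_def by auto
  have cm: "\<And>i. i < L \<Longrightarrow>
      (a1 ! i + e i - 1) mod int (n ! i) + 1 = w1 ! i \<and>
      (a1 ! i + t i - 1) mod int (n ! i) + 1 = a2 ! i \<and>
      (a1 ! i + t i + e i - 1) mod int (n ! i) + 1 = w2 ! i"
  proof -
    fix i assume i: "i < L"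
    show "?thesis i" unfolding e_def t_def
      using coord_mods[OF Ni[OF i], of "a1 ! i" "w1 ! i" "a2 ! i" "w2 ! i"] bnd[OF i] hi1[OF i] hi2[OF i]
      by auto
  qed
  have sb: "\<And>i. i < L \<Longrightarrow> \<bar>e i\<bar> + \<bar>t i\<bar> \<le> int (n ! i) - 1"
  proof -
    fix i assume i: "i < L"
    show "?thesis i" unfolding e_def t_def
      using coord[OF Ni[OF i], of "a1 ! i" "w1 ! i" "a2 ! i" "w2 ! i"] bnd[OF i] hi1[OF i] hi2[OF i]
        half i unfolding L_def by auto
  qed
  have r1: "reduce n a1 = a1"
  proof (rule reduce_eq)
    show "\<forall>i<length n. (a1 ! i - 1) mod int (n ! i) + 1 = a1 ! i"
    proof (intro allI impI)
      fix i assume "i < length n"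
      then have "1 \<le> a1 ! i" "a1 ! i \<le> int (n ! i)" using bnd L_def by auto
      then show "(a1 ! i - 1) mod int (n ! i) + 1 = a1 ! i" using modrep by simp
    qed
  qed (use len in \<open>auto simp: L_def\<close>)
  have r2: "reduce n q1 = w1"
    by (rule reduce_eq) (use len cm in \<open>auto simp: L_def q1_def\<close>)
  have r3: "reduce n p2 = a2"
    by (rule reduce_eq) (use len cm in \<open>auto simp: L_def p2_def\<close>)
  have r4: "reduce n q2 = w2"
    by (rule reduce_eq) (use len cm in \<open>auto simp: L_def q2_def\<close>)
  have lens: "length q1 = L" "length p2 = L" "length q2 = L" "length k = L"
    by (auto simp: q1_def p2_def q2_def k_def)
  have pe: "per_ext n A a1" "per_ext n A q1" "per_ext n A p2" "per_ext n A q2"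
    unfolding per_ext_def using r1 r2 r3 r4 AA len lens by (auto simp: L_def)
  have wk: "k!i \<le> a1!i \<and> a1!i \<le> k!i + int (n!i) - 1 \<and> k!i \<le> q1!i \<and> q1!i \<le> k!i + int (n!i) - 1
     \<and> k!i \<le> p2!i \<and> p2!i \<le> k!i + int (n!i) - 1 \<and> k!i \<le> q2!i \<and> q2!i \<le> k!i + int (n!i) - 1"
    if i: "i < L" for i
  proof -
    have "\<bar>e i\<bar> + \<bar>t i\<bar> \<le> int (n ! i) - 1" using sb[OF i] .
    then show ?thesis using i by (simp add: q1_def p2_def q2_def k_def) arith
  qed
  have win: "in_window n k a1" "in_window n k q1" "in_window n k p2" "in_window n k q2"
    unfolding in_window_def using len lens wk by (auto simp: L_def)
  have d1: "a1 \<noteq> q1" using r1 r2 distinct1 by auto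
  have d2: "p2 \<noteq> q2" using r3 r4 distinct2 by auto
  have d3: "(a1, q1) \<noteq> (p2, q2)" using r1 r2 r3 r4 pairs_ne by auto
  have dv: "diff_vec a1 q1 = diff_vec p2 q2"
    unfolding diff_vec_def using len lens
    by (intro nth_equalityI) (auto simp: q1_def p2_def q2_def)
  have "window_has_repeated_diff n A k"
    unfolding window_has_repeated_diff_def using win pe d1 d2 d3 dv by blast
  then show ?thesis using lens L_def by auto
qed

end
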